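(* $$\sum _{n=0}^{\infty } \left( \frac{1}{16} \right)^{n} \binom{2 n}{n}^2 \frac{ H_n^{(2)}}{n + 1} = \frac{32 G}{\pi }+\frac{2 \pi }{3}-16 \ln (2).$$
   Context: $H_n^{(2)} = \sum_{j=1}^n \frac{1}{j^2}$ (with $H_0^{(2)}=0$), and $G = \sum_{n\ge 0}\frac{(-1)^n}{(2n+1)^2}$ is Catalan's constant. *)

theory Defs
  imports "HOL-Analysis.Analysis"
begin

definition harm2 :: "nat \<Rightarrow> real" where
  "harm2 n = (\<Sum>j=1..n. 1 / (real j)^2)"

definition catalan :: real where
  "catalan = (\<Sum>n. (-1)^n / (2 * real n + 1)^2)"

end

theory Submission
  imports Defs
begin
definition cb :: "nat \<Rightarrow> real" where "cb n = real (2*n choose n) / 4^n"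

lemma central_binom_Suc: "real (2*Suc n choose Suc n) * (real n + 1) = 2 * (2 * real n + 1) * real (2*n choose n)"
proof -
  have e1: "Suc (Suc (2*n)) * (Suc (2*n) choose n) = (Suc (Suc (2*n)) choose Suc n) * Suc n"
    using Suc_times_binomial_eq[of "Suc (2*n)" n] by simp
  have e2: "Suc (2*n) * (2*n choose n) = (Suc (2*n) choose Suc n) * Suc n"
    using Suc_times_binomial_eq[of "2*n" n] by simp
  have e3: "(Suc (2*n) choose Suc n) = (Suc (2*n) choose n)"
    using binomial_symmetric[of "Suc n" "Suc (2*n)"] by simp
  have "2*Suc n = Suc (Suc (2*n))" by simp
  hence "(2*Suc n choose Suc n) * Suc n * Suc n = Suc (Suc (2*n)) * Suc (2*n) * (2*n choose n)"
    using e1 e2 e3 by (metis mult.assoc mult.commute)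
  hence "real ((2*Suc n choose Suc n) * Suc n * Suc n) = real (Suc (Suc (2*n)) * Suc (2*n) * (2*n choose n))"
    by metis
  hence "real (2*Suc n choose Suc n) * (real n + 1) * (real n + 1) = (2 * (real n + 1)) * (2 * real n + 1) * real (2*n choose n)"
    by (simp add: algebra_simps)
  hence "(real n + 1) * (real (2*Suc n choose Suc n) * (real n + 1)) = (real n + 1) * (2 * (2 * real n + 1) * real (2*n choose n))"
    by (simp add: algebra_simps)
  thus ?thesis by (subst (asm) mult_left_cancel) auto
qed

lemma cb_Suc: "cb (Suc n) = cb n * (2 * real n + 1) / (2 * real n + 2)"
proof -
  have "cb (Suc n) * (real n + 1) = 2 * (2 * real n + 1) * real (2*n choose n) / 4^Suc n"
    unfolding cb_def using central_binom_Suc[of n] by (simp add: field_simps)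
  hence "cb (Suc n) * (real n + 1) = cb n * (2 * real n + 1) / 2"
    unfolding cb_def by (simp add: field_simps)
  moreover have "(2*real n + 2) = 2 * (real n + 1)" by simp
  ultimately show ?thesis by (simp add: field_simps)
qed

lemma cb_0 [simp]: "cb 0 = 1" by (simp add: cb_def)
lemma cb_pos: "cb n > 0" by (simp add: cb_def)

lemma harm2_Suc: "harm2 (Suc n) = harm2 n + 1 / (real n + 1)^2"
  unfolding harm2_def by (simp add: sum.cl_ivl_Suc add_ac)

lemma tele_aux:
  fixes x c h :: real assumes "x \<ge> 0"
  shows "4 * (x + 1) * (c * (2 * x + 1) / (2 * x + 2)) ^ 2 * (h + 1 / (x + 1)^2) - 4 * x * c ^ 2 * h
      = c ^ 2 * h / (x + 1) + 4 * ((c * (2 * x + 1) / (2 * x + 2)) ^ 2 / (x + 1))"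
proof -
  define y where "y = x + 1"
  have y: "y > 0" using assms by (simp add: y_def)
  have x: "x = y - 1" by (simp add: y_def)
  have e: "2*x+2 = 2*y" "2*x+1 = 2*y - 1" by (simp_all add: y_def)
  show ?thesis unfolding e y_def[symmetric] unfolding x using y
    by (simp add: field_simps power2_eq_square)
qed

lemma telescope:
  "(\<Sum>n<N. cb n ^ 2 * harm2 n / (real n + 1)) =
     4 * real N * cb N ^ 2 * harm2 N - 4 * (\<Sum>n<N. cb (Suc n) ^ 2 / (real n + 1))"
proof (induction N)
  case 0 thus ?case by (simp add: harm2_def)
next
  case (Suc N)
  have key: "4 * (real N + 1) * cb (Suc N) ^ 2 * harm2 (Suc N) - 4 * real N * cb N ^ 2 * harm2 N
      = cb N ^ 2 * harm2 N / (real N + 1) + 4 * (cb (Suc N) ^ 2 / (real N + 1))"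
    unfolding harm2_Suc cb_Suc by (rule tele_aux) simp
  show ?case using Suc.IH key by (simp add: algebra_simps)
qed

lemma wallis_prod: "(\<Prod>k=1..n. (4*real k^2) / (4*real k^2 - 1)) = 1 / ((2 * real n + 1) * cb n ^ 2)"
proof (induction n)
  case 0 thus ?case by simp
next
  case (Suc n)
  have "(\<Prod>k=1..Suc n. (4*real k^2) / (4*real k^2 - 1)) = 
     (\<Prod>k=1..n. (4*real k^2) / (4*real k^2 - 1)) * ((4*(1 + real n)^2) / (4*(1 + real n)^2 - 1))"
    by (simp add: prod.cl_ivl_Suc)
  also have "\<dots> = 1 / ((2 * real (Suc n) + 1) * cb (Suc n) ^ 2)"
    unfolding Suc.IH cb_Suc using cb_pos[of n]
    by (simp add: field_simps) (simp add: algebra_simps power2_eq_square)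
  finally show ?case .
qed

lemma n_cb2_lim: "(\<lambda>n. real n * cb n ^ 2) \<longlonglongrightarrow> 1 / pi"
proof -
  have "(\<lambda>n. inverse (\<Prod>k=1..n. (4*real k^2) / (4*real k^2 - 1))) \<longlonglongrightarrow> inverse (pi/2)"
    by (rule tendsto_inverse[OF wallis]) simp
  hence A: "(\<lambda>n. (2 * real n + 1) * cb n ^ 2) \<longlonglongrightarrow> 2 / pi"
    unfolding wallis_prod by simp
  have B: "(\<lambda>n. real n / (2 * real n + 1)) \<longlonglongrightarrow> 1/2"
  proof -
    have "(\<lambda>n. real (n*2) / real (Suc (n*2))) \<longlonglongrightarrow> 1"
      by (rule LIMSEQ_linear[OF LIMSEQ_n_over_Suc_n]) simp
    hence "(\<lambda>n. 1/2 * (real (n*2) / real (Suc (n*2)))) \<longlonglongrightarrow> 1/2 * 1"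
      by (intro tendsto_mult tendsto_const)
    moreover have "1/2 * (real (n*2) / real (Suc (n*2))) = real n / (2 * real n + 1)" for n
      by (simp add: field_simps)
    ultimately show ?thesis by (simp add: mult.commute add.commute)
  qed
  have "(\<lambda>n. (2 * real n + 1) * cb n ^ 2 * (real n / (2 * real n + 1))) \<longlonglongrightarrow> 2 / pi * (1/2)"
    by (rule tendsto_mult[OF A B])
  moreover have "(\<lambda>n. (2 * real n + 1) * cb n ^ 2 * (real n / (2 * real n + 1))) = (\<lambda>n. real n * cb n ^ 2)"
    by (rule ext) (simp add: field_simps)
  ultimately show ?thesis by simp
qed

lemma harm2_lim: "harm2 \<longlonglongrightarrow> pi^2/6"
proof -
  have "(\<lambda>N. \<Sum>n<N. 1 / (real n + 1)^2) \<longlonglongrightarrow> pi^2/6"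
    using inverse_squares_sums unfolding sums_def by (simp add: add.commute)
  moreover have "(\<Sum>n<N. 1 / (real n + 1)^2) = harm2 N" for N
    unfolding harm2_def by (induction N) (simp_all add: sum.cl_ivl_Suc add_ac)
  ultimately show ?thesis by simp
qed



lemma ftc_real:
  fixes f f' :: "real \<Rightarrow> real"
  assumes "a \<le> b" "\<And>x. x \<in> {a..b} \<Longrightarrow> (f has_real_derivative f' x) (at x)"
  shows "(f' has_integral (f b - f a)) {a..b}"
proof -
  have "\<And>x. x \<in> {a..b} \<Longrightarrow> (f has_vector_derivative f' x) (at x within {a..b})"
    using assms(2) by (metis has_field_derivative_at_within has_real_derivative_iff_has_vector_derivative)
  then show ?thesis by (rule fundamental_theorem_of_calculus[OF assms(1)])
qed

lemma sinpow_deriv: "((\<lambda>t. sin t ^ Suc m) has_real_derivative (real (Suc m) * sin t ^ m * cos t)) (at t)"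
  using DERIV_power[OF DERIV_sin[of t], of "Suc m"] by (simp add: algebra_simps)

lemma pow_alg:
  fixes c s k :: real assumes "c * c = 1 - s^2"
  shows "- ((k * s^m * c) * c + (- s) * s ^ Suc m) = (k+1) * s^(m+2) - k * s^m"
proof -
  have "(k * s^m * c) * c = k * s^m * (1 - s^2)" using assms by (metis mult.assoc)
  thus ?thesis by (simp add: algebra_simps power2_eq_square)
qed

lemma wallis_integral: "((\<lambda>t. sin t ^ (2*n)) has_integral (pi/2 * cb n)) {0..pi/2}"
proof (induction n)
  case 0
  show ?case using has_integral_const_real[of "1::real" 0 "pi/2"] by simp
next
  case (Suc n)
  have d: "((\<lambda>t. - (sin t ^ Suc (2*n) * cos t)) has_real_derivative
            ((2*real n+2) * sin t ^ (2*n+2) - (2*real n+1) * sin t ^ (2*n))) (at t)" for t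
  proof -
    have "((\<lambda>t. - (sin t ^ Suc (2*n) * cos t)) has_real_derivative
            - ((real (Suc (2*n)) * sin t ^ (2*n) * cos t) * cos t + (- sin t) * sin t ^ Suc (2*n))) (at t)"
      by (rule DERIV_minus[OF DERIV_mult[OF sinpow_deriv DERIV_cos]])
    moreover have "- ((real (Suc (2*n)) * sin t ^ (2*n) * cos t) * cos t + (- sin t) * sin t ^ Suc (2*n))
        = (2*real n+2) * sin t ^ (2*n+2) - (2*real n+1) * sin t ^ (2*n)"
    proof -
      have cc: "cos t * cos t = 1 - sin t ^ 2" using sin_squared_eq[of t] by (simp add: power2_eq_square)
      have "- ((real (Suc (2*n)) * sin t ^ (2*n) * cos t) * cos t + (- sin t) * sin t ^ Suc (2*n))
          = (real (Suc (2*n)) + 1) * sin t ^ (2*n+2) - real (Suc (2*n)) * sin t ^ (2*n)"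
        by (rule pow_alg[OF cc])
      also have "\<dots> = (2*real n+2) * sin t ^ (2*n+2) - (2*real n+1) * sin t ^ (2*n)"
        by (simp add: add.commute)
      finally show ?thesis .
    qed
    ultimately show ?thesis by simp
  qed
  have I0: "((\<lambda>t. (2*real n+2) * sin t ^ (2*n+2) - (2*real n+1) * sin t ^ (2*n)) has_integral 0) {0..pi/2}"
    using ftc_real[OF _ d, of 0 "pi/2"] by simp
  have "((\<lambda>t. ((2*real n+2) * sin t ^ (2*n+2) - (2*real n+1) * sin t ^ (2*n)) + (2*real n+1) * sin t ^ (2*n))
       has_integral (0 + (2*real n+1) * (pi/2 * cb n))) {0..pi/2}"
    by (intro has_integral_add I0 has_integral_mult_right Suc.IH)
  hence "((\<lambda>t. (2*real n+2) * sin t ^ (2*n+2)) has_integral ((2*real n+1) * (pi/2 * cb n))) {0..pi/2}"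
    by simp
  hence HI: "((\<lambda>t. (1 / (2*real n+2)) * ((2*real n+2) * sin t ^ (2*n+2))) has_integral
          (1 / (2*real n+2)) * ((2*real n+1) * (pi/2 * cb n))) {0..pi/2}"
    by (rule has_integral_mult_right)
  have e1: "(1 / (2*real n+2)) * ((2*real n+1) * (pi/2 * cb n)) = pi/2 * cb (Suc n)"
    unfolding cb_Suc by (simp add: field_simps)
  have "2*real n+2 \<noteq> 0" by (simp add: add_nonneg_eq_0_iff)
  hence e2: "(\<lambda>t. (1 / (2*real n+2)) * ((2*real n+2) * sin t ^ (2*n+2))) = (\<lambda>t. sin t ^ (2 * Suc n))"
    by (intro ext) simp
  show ?case using HI unfolding e1 e2 .
qed

lemma term_integral:
  "((\<lambda>t. (pi/2 - t) * sin t ^ (2*n+1) * cos t) has_integral (pi/4 * cb (Suc n) / (real n + 1))) {0..pi/2}"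
proof -
  have d: "((\<lambda>t. (pi/2 - t) * sin t ^ (2*n+2) / (2*real n+2)) has_real_derivative
            ((pi/2 - t) * sin t ^ (2*n+1) * cos t - sin t ^ (2*n+2) / (2*real n+2))) (at t)" for t
  proof -
    have "((\<lambda>t. (pi/2 - t) * sin t ^ (2*n+2) / (2*real n+2)) has_real_derivative
            ((- 1) * sin t ^ (2*n+2) + (pi/2 - t) * (real (2*n+2) * sin t ^ (2*n+1) * cos t)) / (2*real n+2)) (at t)"
    proof -
      have "((\<lambda>t. (pi/2 - t) * sin t ^ Suc (2*n+1)) has_real_derivative
            ((- 1) * sin t ^ Suc (2*n+1) + (real (Suc (2*n+1)) * sin t ^ (2*n+1) * cos t) * (pi/2 - t))) (at t)"
        by (rule DERIV_mult[OF _ sinpow_deriv]) (auto intro!: derivative_eq_intros)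
      hence "((\<lambda>t. (pi/2 - t) * sin t ^ Suc (2*n+1) / (2*real n+2)) has_real_derivative
            ((- 1) * sin t ^ Suc (2*n+1) + (real (Suc (2*n+1)) * sin t ^ (2*n+1) * cos t) * (pi/2 - t)) / (2*real n+2)) (at t)"
        by (rule DERIV_cdivide)
      thus ?thesis by (simp add: algebra_simps)
    qed
    moreover have "((- 1) * sin t ^ (2*n+2) + (pi/2 - t) * (real (2*n+2) * sin t ^ (2*n+1) * cos t)) / (2*real n+2)
       = (pi/2 - t) * sin t ^ (2*n+1) * cos t - sin t ^ (2*n+2) / (2*real n+2)"
      by (simp add: field_simps)
    ultimately show ?thesis by simp
  qed
  have I0: "((\<lambda>t. (pi/2 - t) * sin t ^ (2*n+1) * cos t - sin t ^ (2*n+2) / (2*real n+2)) has_integral 0) {0..pi/2}"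
    using ftc_real[OF _ d, of 0 "pi/2"] by simp
  have W: "((\<lambda>t. sin t ^ (2*n+2) / (2*real n+2)) has_integral (pi/2 * cb (Suc n) / (2*real n+2))) {0..pi/2}"
    using has_integral_divide[OF wallis_integral[of "Suc n"], of "2*real n+2"] by simp
  have "((\<lambda>t. ((pi/2 - t) * sin t ^ (2*n+1) * cos t - sin t ^ (2*n+2) / (2*real n+2)) + sin t ^ (2*n+2) / (2*real n+2))
     has_integral (0 + pi/2 * cb (Suc n) / (2*real n+2))) {0..pi/2}"
    by (intro has_integral_add I0 W)
  moreover have "pi/2 * cb (Suc n) / (2*real n+2) = pi/4 * cb (Suc n) / (real n + 1)"
    by (simp add: field_simps)
  ultimately show ?thesis by simp
qed



lemma cos_pos_aux: "0 \<le> x \<Longrightarrow> x < pi/2 \<Longrightarrow> cos x > 0"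
  by (rule cos_gt_zero_pi) (insert pi_gt_zero, linarith)+

lemma cos_pos_q: "x \<in> {0..pi/4} \<Longrightarrow> cos x > 0"
proof -
  assume "x \<in> {0..pi/4}" hence "0 \<le> x" "x \<le> pi/4" by auto
  thus ?thesis using pi_gt_zero by (intro cos_pos_aux) linarith+
qed

lemma cos_pos_h: "x \<in> {0..pi/2} \<Longrightarrow> cos (x/2) > 0"
proof -
  assume "x \<in> {0..pi/2}" hence "0 \<le> x" "x \<le> pi/2" by auto
  thus ?thesis using pi_gt_zero by (intro cos_pos_aux) linarith+
qed

definition sincf :: "real \<Rightarrow> real" where "sincf z = (if z = 0 then 1 else sin z / z)"

lemma isCont_sincf: "isCont sincf x"
proof (cases "x = 0")
  case True
  have "(sincf has_field_derivative 0) (at 0)"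
    using has_field_derivative_sin_z_over_z[of UNIV] unfolding sincf_def by simp
  thus ?thesis using True DERIV_isCont by blast
next
  case False
  have ev: "eventually (\<lambda>z. sincf z = sin z / z) (nhds x)"
    using t1_space_nhds[OF False] by eventually_elim (simp add: sincf_def)
  have c: "isCont (\<lambda>z. sin z / z) x" using False by (intro continuous_intros) auto
  show ?thesis using isCont_cong[OF ev] c by simp
qed

lemma sincf_pos: "0 \<le> z \<Longrightarrow> z < pi \<Longrightarrow> sincf z > 0"
  by (auto simp: sincf_def intro!: divide_pos_pos sin_gt_zero)

definition gg :: "real \<Rightarrow> real" where "gg z = inverse (sincf z)"

lemma gg_eq: "gg z = (if z = 0 then 1 else z / sin z)"
  by (simp add: gg_def sincf_def)

lemma gg_cont: "continuous_on {0..pi/2} gg"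
proof -
  have "\<forall>x\<in>{0..pi/2}. isCont gg x"
  proof
    fix x :: real assume "x \<in> {0..pi/2}"
    hence "sincf x \<noteq> 0" using sincf_pos[of x] pi_gt_zero by auto
    thus "isCont gg x" unfolding gg_def by (intro continuous_at_within_inverse isCont_sincf)
  qed
  thus ?thesis by (rule continuous_at_imp_continuous_on)
qed

definition ff :: "real \<Rightarrow> real" where "ff z = gg z * cos z"

lemma ff_cont: "continuous_on {0..pi/2} ff"
  unfolding ff_def by (intro continuous_intros gg_cont)

lemma ff_0 [simp]: "ff 0 = 1" by (simp add: ff_def gg_eq)
lemma ff_nz: "z \<noteq> 0 \<Longrightarrow> ff z = z * cos z / sin z" by (simp add: ff_def gg_eq)

lemma tan_integral: "((\<lambda>x. tan x) has_integral (ln 2 / 2)) {0..pi/4}"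
proof -
  have d: "((\<lambda>x. - ln (cos x)) has_real_derivative tan x) (at x)" if "x \<in> {0..pi/4}" for x
  proof -
    have "cos x > 0" using that by (rule cos_pos_q)
    hence "((\<lambda>x. - ln (cos x)) has_real_derivative (- (- sin x / cos x))) (at x)"
      by (auto intro!: derivative_eq_intros)
    thus ?thesis by (simp add: tan_def)
  qed
  have "((\<lambda>x. tan x) has_integral (- ln (cos (pi/4)) - - ln (cos 0))) {0..pi/4}"
    by (rule ftc_real[OF _ d]) auto
  moreover have "- ln (cos (pi/4)) - - ln (cos 0) = ln 2 / 2"
    by (simp add: cos_45 ln_div ln_sqrt)
  ultimately show ?thesis by (simp only:)
qed

lemma tan_half_integral: "((\<lambda>x. tan (x/2)) has_integral ln 2) {0..pi/2}"
proof -
  have d: "((\<lambda>x. - 2 * ln (cos (x/2))) has_real_derivative tan (x/2)) (at x)" if "x \<in> {0..pi/2}" for x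
  proof -
    have "cos (x/2) > 0" using that by (rule cos_pos_h)
    hence "((\<lambda>x. - 2 * ln (cos (x/2))) has_real_derivative (- 2 * ((- sin (x/2) * (1/2)) / cos (x/2)))) (at x)"
      by (auto intro!: derivative_eq_intros)
    thus ?thesis by (simp add: tan_def)
  qed
  have "((\<lambda>x. tan (x/2)) has_integral (- 2 * ln (cos ((pi/2)/2)) - - 2 * ln (cos (0/2)))) {0..pi/2}"
    by (rule ftc_real[OF _ d]) auto
  moreover have "- 2 * ln (cos ((pi/2)/2)) - - 2 * ln (cos (0/2)) = ln 2"
    by (simp add: cos_45 ln_div ln_sqrt)
  ultimately show ?thesis by (simp only:)
qed

lemma ff_double: "x \<in> {0..pi/4} \<Longrightarrow> ff (2*x) = ff x - x * tan x"
proof (cases "x = 0")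
  case True thus ?thesis by simp
next
  case False
  assume x: "x \<in> {0..pi/4}"
  have cp: "cos x > 0" using x by (rule cos_pos_q)
  have "x \<le> pi/4" using x by simp
  hence sp: "sin x > 0" using False x pi_gt_zero by (intro sin_gt_zero) (simp, linarith)
  have "ff (2*x) = 2*x * cos (2*x) / sin (2*x)" using False by (intro ff_nz) simp
  also have "\<dots> = 2*x * (cos x ^ 2 - sin x ^ 2) / (2 * sin x * cos x)"
    by (simp only: sin_double cos_double)
  also have "\<dots> = x * cos x / sin x - x * (sin x / cos x)"
    using sp cp by (simp add: field_simps power2_eq_square)
  finally show ?thesis using False by (simp add: ff_nz tan_def)
qed

lemma ff_reflect: "x \<in> {0..pi/4} \<Longrightarrow> ff (pi/2 - x) = (pi/2 - x) * tan x"
proof -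
  assume x: "x \<in> {0..pi/4}"
  hence "x \<le> pi/4" by simp
  hence "pi/2 - x \<noteq> 0" using pi_gt_zero by linarith
  moreover have "cos (pi/2 - x) = sin x" by (simp add: cos_diff)
  moreover have "sin (pi/2 - x) = cos x" by (simp add: sin_diff)
  ultimately show ?thesis by (simp add: ff_nz tan_def)
qed

lemma K1_value: "(ff has_integral (pi/2 * ln 2)) {0..pi/2}"
proof -
  define A where "A = integral {0..pi/4} ff"
  define B where "B = integral {0..pi/4} (\<lambda>x. x * tan x)"
  define K where "K = integral {0..pi/2} ff"
  have intK: "(ff has_integral K) {0..pi/2}"
    unfolding K_def by (intro integrable_integral integrable_continuous_interval ff_cont)
  have contA: "continuous_on {0..pi/4} ff" by (rule continuous_on_subset[OF ff_cont]) auto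
  have intA: "(ff has_integral A) {0..pi/4}"
    unfolding A_def by (intro integrable_integral integrable_continuous_interval contA)
  have contB: "continuous_on {0..pi/4} (\<lambda>x. x * tan x)"
  proof -
    have cpos: "\<And>x. x \<in> {0..pi/4} \<Longrightarrow> cos x > 0" by (rule cos_pos_q)
    show ?thesis unfolding tan_def by (intro continuous_intros) (use cpos in force)
  qed
  have intB: "((\<lambda>x. x * tan x) has_integral B) {0..pi/4}"
    unfolding B_def by (intro integrable_integral integrable_continuous_interval contB)
  have intR: "(ff has_integral (pi/2 * (ln 2 / 2) - B)) {pi/4..pi/2}"
  proof -
    have "((\<lambda>x. pi/2 * tan x - x * tan x) has_integral (pi/2 * (ln 2 / 2) - B)) {0..pi/4}"
      by (intro has_integral_diff has_integral_mult_right tan_integral intB)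
    hence "((\<lambda>x. ff (pi/2 - x)) has_integral (pi/2 * (ln 2 / 2) - B)) {0..pi/4}"
      by (rule has_integral_eq[rotated]) (simp add: ff_reflect algebra_simps)
    hence "((\<lambda>x. ff (pi/2 - (x + pi/2))) has_integral (pi/2 * (ln 2 / 2) - B)) {0 - pi/2..pi/4 - pi/2}"
      by (rule has_integral_shift_real_ivl)
    moreover have "(\<lambda>x. ff (pi/2 - (x + pi/2))) = (\<lambda>x. ff (- x))" by simp
    moreover have "{0 - pi/2..pi/4 - pi/2} = {- (pi/2)..- (pi/4)}" by simp
    ultimately have "((\<lambda>x. ff (- x)) has_integral (pi/2 * (ln 2 / 2) - B)) {- (pi/2)..- (pi/4)}"
      by (simp only:)
    thus ?thesis by (simp only: has_integral_reflect_real)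
  qed
  have "(ff has_integral (A + (pi/2 * (ln 2 / 2) - B))) {0..pi/2}"
    by (rule has_integral_combine[of 0 "pi/4" "pi/2"]) (use intA intR pi_gt_zero in auto)
  hence K1: "K = A + (pi/2 * (ln 2 / 2) - B)" using intK by (metis has_integral_unique)
  have "((\<lambda>x. 2 *\<^sub>R ff (2 * x)) has_integral (integral {2*0..2*(pi/4)} ff)) {0..pi/4}"
    by (rule has_integral_substitution[where c=0 and d="pi/2"])
       (auto intro!: derivative_eq_intros ff_cont)
  hence "((\<lambda>x. 2 * ff (2 * x)) has_integral K) {0..pi/4}" by (simp add: K_def)
  moreover have "((\<lambda>x. 2 * ff (2 * x)) has_integral (2 * (A - B))) {0..pi/4}"
  proof -
    have "((\<lambda>x. 2 * (ff x - x * tan x)) has_integral (2 * (A - B))) {0..pi/4}"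
      by (intro has_integral_mult_right has_integral_diff intA intB)
    thus ?thesis by (rule has_integral_eq[rotated]) (simp add: ff_double)
  qed
  ultimately have K2: "K = 2 * (A - B)" by (rule has_integral_unique)
  from K1 K2 have "K = pi/2 * ln 2" by (simp add: algebra_simps)
  thus ?thesis using intK by (simp only:)
qed



lemma alt_bound:
  fixes c :: "nat \<Rightarrow> real"
  assumes "\<And>n. 0 \<le> c n" "\<And>n. c (Suc n) \<le> c n"
  shows "0 \<le> (\<Sum>k<N. (-1)^k * c k) \<and> (\<Sum>k<N. (-1)^k * c k) \<le> c 0"
  using assms
proof (induction N arbitrary: c)
  case 0 thus ?case by simp
next
  case (Suc N)
  have IH: "0 \<le> (\<Sum>k<N. (-1)^k * c (Suc k)) \<and> (\<Sum>k<N. (-1)^k * c (Suc k)) \<le> c (Suc 0)"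
    using Suc.IH[of "\<lambda>k. c (Suc k)"] Suc.prems by auto
  have "(\<Sum>k<Suc N. (-1)^k * c k) = c 0 - (\<Sum>k<N. (-1)^k * c (Suc k))"
    by (subst sum.lessThan_Suc_shift) (simp add: sum_negf)
  thus ?case using IH Suc.prems(1)[of 0] Suc.prems(2)[of 0] by auto
qed

lemma tan_half_range: "x \<in> {0..pi/2} \<Longrightarrow> 0 \<le> tan (x/2) \<and> tan (x/2) \<le> 1"
proof -
  assume x: "x \<in> {0..pi/2}"
  hence c: "cos (x/2) > 0" by (rule cos_pos_h)
  have "0 \<le> x/2" "x/2 \<le> pi/4" using x by auto
  moreover have "sin (x/2) \<ge> 0" using \<open>0 \<le> x/2\<close> \<open>x/2 \<le> pi/4\<close> pi_gt_zero by (intro sin_ge_zero) linarith+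
  ultimately have "0 \<le> tan (x/2)" using c by (simp add: tan_def)
  moreover have "tan (x/2) \<le> tan (pi/4)"
    using \<open>0 \<le> x/2\<close> \<open>x/2 \<le> pi/4\<close> pi_gt_zero by (intro tan_mono_le) linarith+
  ultimately show ?thesis by (simp add: tan_45)
qed

definition uterm :: "nat \<Rightarrow> real \<Rightarrow> real" where
  "uterm k x = (-1)^k * (tan (x/2) ^ (2*k) * (1 + tan (x/2) ^ 2) / (2 * real k + 1))"

lemma alg2: fixes b ia T :: real assumes "b \<noteq> 0"
  shows "2 * (b * ((ia * (1/2)) * T)) / b = T * ia"
  using assms by (simp add: field_simps)

lemma uterm_integral: "(uterm k has_integral ((-1)^k * (2 / (2 * real k + 1)^2))) {0..pi/2}"
proof -
  have d: "((\<lambda>x. 2 * tan (x/2) ^ (2*k+1) / (2 * real k + 1)) has_real_derivative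
            tan (x/2) ^ (2*k) * (1 + tan (x/2) ^ 2)) (at x)" if "x \<in> {0..pi/2}" for x
  proof -
    have c: "cos (x/2) \<noteq> 0" using cos_pos_h[OF that] by simp
    have dt: "((\<lambda>x. tan (x/2)) has_real_derivative (inverse (cos (x/2) ^ 2) * (1/2))) (at x)"
      by (rule DERIV_chain2[where g="\<lambda>x. x/2" and x=x, OF DERIV_tan[OF c]]) (auto intro!: derivative_eq_intros)
    have "((\<lambda>x. 2 * tan (x/2) ^ Suc (2*k) / (2 * real k + 1)) has_real_derivative
            2 * (real (Suc (2*k)) * ((inverse (cos (x/2) ^ 2) * (1/2)) * tan (x/2) ^ (Suc (2*k) - Suc 0))) / (2 * real k + 1)) (at x)"
      by (intro DERIV_cdivide DERIV_cmult DERIV_power dt)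
    moreover have "2 * (real (Suc (2*k)) * ((inverse (cos (x/2) ^ 2) * (1/2)) * tan (x/2) ^ (Suc (2*k) - Suc 0))) / (2 * real k + 1)
        = tan (x/2) ^ (2*k) * (1 + tan (x/2) ^ 2)"
    proof -
      have b: "2 * real k + 1 \<noteq> 0" by (simp add: add_nonneg_eq_0_iff)
      have e: "real (Suc (2*k)) = 2 * real k + 1" "Suc (2*k) - Suc 0 = 2*k" by simp_all
      have "2 * (real (Suc (2*k)) * ((inverse (cos (x/2) ^ 2) * (1/2)) * tan (x/2) ^ (Suc (2*k) - Suc 0))) / (2 * real k + 1)
          = tan (x/2) ^ (2*k) * inverse (cos (x/2) ^ 2)" unfolding e using alg2[OF b] by blast
      hence "2 * (real (Suc (2*k)) * ((inverse (cos (x/2) ^ 2) * (1/2)) * tan (x/2) ^ (Suc (2*k) - Suc 0))) / (2 * real k + 1)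
          = tan (x/2) ^ (2*k) * inverse (cos (x/2)) ^ 2" by (simp add: power_inverse)
      thus ?thesis using tan_sec[OF c] by simp
    qed
    ultimately show ?thesis by simp
  qed
  have "((\<lambda>x. tan (x/2) ^ (2*k) * (1 + tan (x/2) ^ 2)) has_integral
      (2 * tan ((pi/2)/2) ^ (2*k+1) / (2 * real k + 1) - 2 * tan (0/2) ^ (2*k+1) / (2 * real k + 1))) {0..pi/2}"
    by (rule ftc_real[OF _ d]) auto
  moreover have "2 * tan ((pi/2)/2) ^ (2*k+1) / (2 * real k + 1) - 2 * tan (0/2) ^ (2*k+1) / (2 * real k + 1)
      = 2 / (2 * real k + 1)" by (simp add: tan_45)
  ultimately have "((\<lambda>x. tan (x/2) ^ (2*k) * (1 + tan (x/2) ^ 2)) has_integral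
      (2 / (2 * real k + 1))) {0..pi/2}" by (simp only:)
  hence "((\<lambda>x. (-1)^k * (tan (x/2) ^ (2*k) * (1 + tan (x/2) ^ 2) / (2 * real k + 1))) has_integral
      ((-1)^k * (2 / (2 * real k + 1) / (2 * real k + 1)))) {0..pi/2}"
    by (intro has_integral_mult_right has_integral_divide)
  moreover have "2 / (2 * real k + 1) / (2 * real k + 1) = 2 / (2 * real k + 1)^2"
    by (simp add: power2_eq_square)
  ultimately show ?thesis unfolding uterm_def by (simp only:)
qed

lemma catalan_sums: "(\<lambda>k. (-1)^k / (2 * real k + 1)^2) sums catalan"
proof -
  have s1: "summable (\<lambda>n. 1 / (real n + 1)^2)"
    using inverse_squares_sums by (simp add: sums_iff add.commute)
  have "summable (\<lambda>k. (-1)^k / (2 * real k + 1)^2 :: real)"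
  proof (rule summable_comparison_test[OF _ s1])
    show "\<exists>N. \<forall>n\<ge>N. norm ((-1)^n / (2 * real n + 1)^2 :: real) \<le> 1 / (real n + 1)^2"
    proof (intro exI allI impI)
      fix n :: nat
      have "(real n + 1)^2 \<le> (2 * real n + 1)^2" by (intro power_mono) auto
      hence "1 / (2 * real n + 1)^2 \<le> 1 / (real n + 1)^2"
        by (intro divide_left_mono) auto
      thus "norm ((-1)^n / (2 * real n + 1)^2 :: real) \<le> 1 / (real n + 1)^2"
        by (simp add: abs_mult power_abs)
    qed
  qed
  thus ?thesis unfolding catalan_def by (simp add: summable_sums)
qed

lemma alg3: fixes t Q a b T :: real assumes "t \<noteq> 0" "b \<noteq> 0"
  shows "(Q / t) * (a * (1 / b * (T * t))) = a * (T * Q / b)"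
  using assms by (simp add: field_simps)

lemma tan_half_pos: "x \<in> {0<..pi/2} \<Longrightarrow> tan (x/2) > 0"
proof -
  assume x: "x \<in> {0<..pi/2}"
  hence c: "cos (x/2) > 0" by (intro cos_pos_h) auto
  have "0 < x/2" "x/2 \<le> pi/4" using x by auto
  hence "sin (x/2) > 0" using pi_gt_zero by (intro sin_gt_zero) linarith+
  thus ?thesis using c by (simp add: tan_def)
qed

lemma sin_via_tan_half: "cos (x/2) \<noteq> 0 \<Longrightarrow> sin x = 2 * tan (x/2) / (1 + tan (x/2)^2)"
proof -
  assume c: "cos (x/2) \<noteq> 0"
  have "sin x = sin (2 * (x/2))" by simp
  also have "\<dots> = 2 * sin (x/2) * cos (x/2)" by (rule sin_double)
  also have "\<dots> = 2 * tan (x/2) / (1 + tan (x/2)^2)"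
    unfolding tan_sec[OF c] using c by (simp add: tan_def field_simps power2_eq_square power_inverse)
  finally show ?thesis .
qed

lemma uterm_sums: "x \<in> {0..pi/2} \<Longrightarrow> (\<lambda>k. uterm k x) sums gg x"
proof (cases "x = 0")
  case True
  have "(\<lambda>k. uterm k x) = (\<lambda>k. if k = 0 then 1 else 0)"
    using True by (auto simp: uterm_def)
  moreover have "(\<lambda>k. if k = 0 then 1 else 0 :: real) sums 1"
    using sums_single[of 0 "\<lambda>_. 1::real"] by simp
  ultimately show ?thesis using True by (simp add: gg_eq)
next
  case False
  assume x: "x \<in> {0..pi/2}"
  hence x': "x \<in> {0<..pi/2}" using False by auto
  define t where "t = tan (x/2)"
  have t: "0 < t" "t \<le> 1" using tan_half_pos[OF x'] tan_half_range[OF x] by (auto simp: t_def)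
  have c: "cos (x/2) \<noteq> 0" using cos_pos_h[OF x] by simp
  have "(\<lambda>k. (-1)^k * (1 / real (k*2+1) * t ^ (k*2+1))) sums arctan t"
    using summable_arctan_series[of t] arctan_series[of t] t by (simp add: sums_iff)
  hence "(\<lambda>k. (1 + t^2) / t * ((-1)^k * (1 / real (k*2+1) * t ^ (k*2+1)))) sums ((1 + t^2) / t * arctan t)"
    by (rule sums_mult)
  moreover have "(1 + t^2) / t * ((-1)^k * (1 / real (k*2+1) * t ^ (k*2+1))) = uterm k x" for k
  proof -
    have e1: "t ^ (k*2+1) = t^(2*k) * t" by (simp add: power_add mult.commute)
    have e2: "real (k*2+1) = 2 * real k + 1" by simp
    have nz: "t \<noteq> 0" "2 * real k + 1 \<noteq> 0" using t by (auto simp: add_nonneg_eq_0_iff)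
    show ?thesis unfolding uterm_def t_def[symmetric] e1 e2 by (rule alg3[OF nz])
  qed
  moreover have "(1 + t^2) / t * arctan t = gg x"
  proof -
    have "0 \<le> x" "x \<le> pi/2" using x by auto
    hence "-(pi/2) < x/2" "x/2 < pi/2" using pi_gt_zero by linarith+
    hence "arctan t = x/2" unfolding t_def by (intro arctan_tan)
    moreover have "sin x = 2 * t / (1 + t^2)" unfolding t_def by (rule sin_via_tan_half[OF c])
    ultimately show ?thesis using False t by (simp add: gg_eq field_simps)
  qed
  ultimately show ?thesis by simp
qed

lemma gg_integral: "(gg has_integral (2 * catalan)) {0..pi/2}"
proof -
  define f where "f = (\<lambda>N x. \<Sum>k<N. uterm k x)"
  define h where "h = (\<lambda>x::real. 1 + tan (x/2) ^ 2)"
  have fint: "(f N has_integral (\<Sum>k<N. (-1)^k * (2 / (2 * real k + 1)^2))) {0..pi/2}" for N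
    unfolding f_def by (intro has_integral_sum uterm_integral) auto
  have hcont: "continuous_on {0..pi/2} h"
  proof -
    have "\<forall>x\<in>{0..pi/2}. cos (x/2) \<noteq> 0" using cos_pos_h by force
    thus ?thesis unfolding h_def tan_def by (intro continuous_intros) auto
  qed
  have bound: "norm (f N x) \<le> h x" if x: "x \<in> {0..pi/2}" for N x
  proof -
    define t where "t = tan (x/2)"
    have t: "0 \<le> t" "t \<le> 1" using tan_half_range[OF x] by (auto simp: t_def)
    define c where "c = (\<lambda>k::nat. t^(2*k) / (2 * real k + 1))"
    have c0: "\<And>k. 0 \<le> c k" using t by (simp add: c_def)
    have c1: "\<And>k. c (Suc k) \<le> c k"
    proof -
      fix k
      have "t^(2*Suc k) \<le> t^(2*k)" using t by (intro power_decreasing) auto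
      moreover have "0 \<le> t^(2*Suc k)" using t by simp
      ultimately show "c (Suc k) \<le> c k" unfolding c_def
        by (intro frac_le) auto
    qed
    have "f N x = (1 + t^2) * (\<Sum>k<N. (-1)^k * c k)"
      unfolding f_def uterm_def c_def t_def[symmetric] by (simp add: sum_distrib_left algebra_simps)
    moreover have "0 \<le> (\<Sum>k<N. (-1)^k * c k) \<and> (\<Sum>k<N. (-1)^k * c k) \<le> c 0"
      by (rule alt_bound) (rule c0, rule c1)
    moreover have "c 0 = 1" by (simp add: c_def)
    ultimately show ?thesis unfolding h_def t_def[symmetric]
      by (simp add: abs_mult) (smt (verit) mult_left_le zero_le_power2)
  qed
  have conv: "(\<lambda>N. f N x) \<longlonglongrightarrow> gg x" if "x \<in> {0..pi/2}" for x
    using uterm_sums[OF that] unfolding f_def sums_def .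
  have dc: "(\<lambda>N. integral {0..pi/2} (f N)) \<longlonglongrightarrow> integral {0..pi/2} gg"
    by (rule dominated_convergence(2)[where h=h])
       (use fint hcont bound conv in \<open>auto intro: has_integral_integrable integrable_continuous_interval\<close>)
  moreover have "(\<lambda>N. integral {0..pi/2} (f N)) \<longlonglongrightarrow> 2 * catalan"
  proof -
    have "(\<lambda>k. 2 * ((-1)^k / (2 * real k + 1)^2)) sums (2 * catalan)"
      by (rule sums_mult[OF catalan_sums])
    hence "(\<lambda>N. \<Sum>k<N. 2 * ((-1)^k / (2 * real k + 1)^2)) \<longlonglongrightarrow> 2 * catalan" by (simp add: sums_def)
    moreover have "integral {0..pi/2} (f N) = (\<Sum>k<N. 2 * ((-1)^k / (2 * real k + 1)^2))" for N
      using integral_unique[OF fint[of N]] by (simp add: algebra_simps)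
    ultimately show ?thesis by simp
  qed
  ultimately have "integral {0..pi/2} gg = 2 * catalan" by (rule LIMSEQ_unique)
  moreover have "gg integrable_on {0..pi/2}" by (intro integrable_continuous_interval gg_cont)
  ultimately show ?thesis using has_integral_integral by metis
qed



lemma cb_gchoose: "((-1/2 :: real) gchoose n) * (-1)^n = cb n"
proof (induction n)
  case 0 thus ?case by simp
next
  case (Suc n)
  have r: "((-1/2::real) gchoose Suc n) = ((-1/2) - real n) / (real n + 1) * ((-1/2) gchoose n)"
    using gbinomial_mult_1[of "-1/2::real" n] by (simp add: field_simps)
  have "((-1/2 :: real) gchoose Suc n) * (-1)^Suc n = ((1/2) + real n) / (real n + 1) * (((-1/2) gchoose n) * (-1)^n)"
    unfolding r by (simp add: algebra_simps)
  also have "\<dots> = cb (Suc n)" unfolding Suc.IH cb_Suc by (simp add: field_simps)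
  finally show ?case .
qed

lemma gf_cb: assumes "0 \<le> y" "y < 1" shows "(\<lambda>n. cb n * y^n) sums ((1 - y) powr (-1/2))"
proof -
  have "(\<lambda>n. ((-1/2::real) gchoose n) * (-y)^n) sums ((1 + (-y)) powr (-1/2))"
    by (rule gen_binomial_real) (use assms in auto)
  moreover have "((-1/2::real) gchoose n) * (-y)^n = cb n * y^n" for n
    using cb_gchoose[of n] by (simp add: power_minus[of y] mult.assoc[symmetric])
  ultimately show ?thesis by simp
qed

definition HH :: "real \<Rightarrow> real" where "HH x = pi/2 * tan (x/2) - (gg x - ff x)"

lemma HH_integral: "(HH has_integral (pi * ln 2 - 2 * catalan)) {0..pi/2}"
proof -
  have "((\<lambda>x. pi/2 * tan (x/2) - (gg x - ff x)) has_integral (pi/2 * ln 2 - (2 * catalan - pi/2 * ln 2))) {0..pi/2}"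
    by (intro has_integral_diff has_integral_mult_right tan_half_integral gg_integral K1_value)
  moreover have "pi/2 * ln 2 - (2 * catalan - pi/2 * ln 2) = pi * ln 2 - 2 * catalan" by simp
  ultimately show ?thesis unfolding HH_def by (simp only:)
qed

definition wterm :: "nat \<Rightarrow> real \<Rightarrow> real" where
  "wterm n x = cb (Suc n) * ((pi/2 - x) * sin x ^ (2*n+1) * cos x)"

lemma wterm_nonneg: "x \<in> {0..pi/2} \<Longrightarrow> 0 \<le> wterm n x"
proof -
  assume x: "x \<in> {0..pi/2}"
  have b: "0 \<le> x" "x \<le> pi/2" using x by auto
  have "0 \<le> sin x" using b pi_gt_zero by (intro sin_ge_zero) linarith+
  moreover have "0 \<le> cos x" using b pi_gt_zero by (intro cos_ge_zero) linarith+
  moreover have "0 \<le> pi/2 - x" using x by simp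
  ultimately show ?thesis unfolding wterm_def using cb_pos[of "Suc n"] by simp
qed

lemma wterm_sums: "x \<in> {0..pi/2} \<Longrightarrow> (\<lambda>n. wterm n x) sums HH x"
proof -
  assume x: "x \<in> {0..pi/2}"
  consider "x = 0" | "x = pi/2" | "0 < x \<and> x < pi/2" using x by fastforce
  thus ?thesis
  proof cases
    case 1 thus ?thesis by (simp add: wterm_def HH_def gg_eq)
  next
    case 2
    have "HH x = 0" unfolding 2 HH_def gg_eq ff_def by (simp add: tan_45)
    moreover have "wterm n x = 0" for n unfolding 2 wterm_def by simp
    ultimately show ?thesis by simp
  next
    case 3
    define s where "s = sin x"
    define c where "c = cos x"
    have sp: "s > 0" unfolding s_def using 3 pi_gt_zero by (intro sin_gt_zero) linarith+
    have cp: "c > 0" unfolding c_def using 3 by (intro cos_pos_aux) auto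
    have sc: "s^2 + c^2 = 1" unfolding s_def c_def by simp
    have s1: "s^2 < 1" using sc cp by (smt (verit) zero_less_power2)
    have "(\<lambda>n. cb n * (s^2)^n) sums ((1 - s^2) powr (-1/2))"
      by (rule gf_cb) (use s1 in auto)
    moreover have "(1 - s^2) powr (-1/2) = 1 / c"
    proof -
      have "1 - s^2 = c^2" using sc by simp
      hence "(1 - s^2) powr (-1/2) = inverse ((c^2) powr (1/2))" by (simp add: powr_minus)
      also have "\<dots> = 1 / c" using cp by (simp add: powr_half_sqrt inverse_eq_divide)
      finally show ?thesis .
    qed
    ultimately have "(\<lambda>n. cb n * (s^2)^n) sums (1 / c)" by simp
    hence "(\<lambda>n. cb (Suc n) * (s^2)^(Suc n)) sums (1 / c - cb 0 * (s^2)^0)"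
      by (subst sums_Suc_iff) simp
    hence "(\<lambda>n. (pi/2 - x) * c / s * (cb (Suc n) * (s^2)^(Suc n))) sums ((pi/2 - x) * c / s * (1 / c - 1))"
      by (intro sums_mult) simp
    moreover have "(pi/2 - x) * c / s * (cb (Suc n) * (s^2)^(Suc n)) = wterm n x" for n
      unfolding wterm_def s_def[symmetric] c_def[symmetric] using sp
      by (simp add: field_simps power_mult power_add power2_eq_square)
    moreover have "(pi/2 - x) * c / s * (1 / c - 1) = HH x"
    proof -
      have "x \<noteq> 0" using 3 by simp
      have t: "tan (x/2) = s / (c + 1)" using tan_half[of "x/2"] by (simp add: s_def c_def)
      have "HH x = pi/2 * (s / (c + 1)) - (x / s - x * c / s)"
        unfolding HH_def t gg_eq ff_nz[OF \<open>x \<noteq> 0\<close>] using \<open>x \<noteq> 0\<close> by (simp add: s_def c_def)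
      moreover have "s / (c + 1) = (1 - c) / s"
        using sp cp sc by (simp add: field_simps power2_eq_square)
      moreover have "x / s - x * c / s = x * ((1-c)/s)" using sp by (simp add: field_simps)
      ultimately have H: "HH x = pi/2 * ((1-c)/s) - x * ((1-c)/s)" by simp
      have "(pi/2 - x) * c / s * (1 / c - 1) = (pi/2 - x) * ((1 - c)/s)"
        using cp sp by (simp add: field_simps)
      also have "\<dots> = pi/2 * ((1-c)/s) - x * ((1-c)/s)" by (rule left_diff_distrib)
      also have "\<dots> = HH x" by (rule H[symmetric])
      finally show ?thesis .
    qed
    ultimately show ?thesis by simp
  qed
qed

lemma S1_lim: "(\<lambda>N. \<Sum>n<N. cb (Suc n) ^ 2 / (real n + 1)) \<longlonglongrightarrow> 4 * ln 2 - 8 * catalan / pi"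
proof -
  define f where "f = (\<lambda>k x. \<Sum>n<k. wterm n x)"
  have fint: "(f k has_integral (\<Sum>n<k. cb (Suc n) * (pi/4 * cb (Suc n) / (real n + 1)))) {0..pi/2}" for k
    unfolding f_def wterm_def by (intro has_integral_sum has_integral_mult_right term_integral) auto
  have HHint: "HH integrable_on {0..pi/2}" using HH_integral by blast
  have le: "f k x \<le> HH x" if "x \<in> {0..pi/2}" for k x
  proof -
    have "summable (\<lambda>n. wterm n x)" using wterm_sums[OF that] by (simp add: sums_iff)
    hence "f k x \<le> (\<Sum>n. wterm n x)" unfolding f_def
      by (intro sum_le_suminf) (auto intro: wterm_nonneg[OF that])
    thus ?thesis using wterm_sums[OF that] by (simp add: sums_iff)
  qed
  have mc: "HH integrable_on {0..pi/2} \<and> (\<lambda>k. integral {0..pi/2} (f k)) \<longlonglongrightarrow> integral {0..pi/2} HH"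
  proof (rule monotone_convergence_increasing)
    show "f k integrable_on {0..pi/2}" for k using fint by blast
    show "f k x \<le> f (Suc k) x" if "x \<in> {0..pi/2}" for k x
      unfolding f_def using wterm_nonneg[OF that, of k] by simp
    show "(\<lambda>k. f k x) \<longlonglongrightarrow> HH x" if "x \<in> {0..pi/2}" for x
      using wterm_sums[OF that] unfolding f_def sums_def .
    have "range (\<lambda>k. integral {0..pi/2} (f k)) \<subseteq> {0..integral {0..pi/2} HH}"
    proof clarify
      fix k
      have "0 \<le> integral {0..pi/2} (f k)"
        using fint[of k] by (intro integral_nonneg) (auto simp: f_def intro!: sum_nonneg wterm_nonneg)
      moreover have "integral {0..pi/2} (f k) \<le> integral {0..pi/2} HH"
        using fint[of k] HHint le by (intro integral_le) auto
      ultimately show "integral {0..pi/2} (f k) \<in> {0..integral {0..pi/2} HH}" by simp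
    qed
    thus "bounded (range (\<lambda>k. integral {0..pi/2} (f k)))"
      by (rule bounded_subset[OF compact_imp_bounded[OF compact_Icc]])
  qed
  have "integral {0..pi/2} HH = pi * ln 2 - 2 * catalan" using HH_integral by (rule integral_unique)
  moreover have "(\<lambda>k. integral {0..pi/2} (f k)) = (\<lambda>k. pi/4 * (\<Sum>n<k. cb (Suc n) ^ 2 / (real n + 1)))"
  proof
    fix k
    show "integral {0..pi/2} (f k) = pi/4 * (\<Sum>n<k. cb (Suc n) ^ 2 / (real n + 1))"
      using integral_unique[OF fint[of k]] by (simp add: sum_distrib_left power2_eq_square algebra_simps)
  qed
  ultimately have "(\<lambda>k. pi/4 * (\<Sum>n<k. cb (Suc n) ^ 2 / (real n + 1))) \<longlonglongrightarrow> pi * ln 2 - 2 * catalan"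
    using mc by metis
  hence "(\<lambda>k. 4/pi * (pi/4 * (\<Sum>n<k. cb (Suc n) ^ 2 / (real n + 1)))) \<longlonglongrightarrow> 4/pi * (pi * ln 2 - 2 * catalan)"
    by (intro tendsto_mult tendsto_const)
  moreover have "4/pi * (pi * ln 2 - 2 * catalan) = 4 * ln 2 - 8 * catalan / pi"
    by (simp add: field_simps)
  ultimately show ?thesis by simp
qed

theorem mainTheorem7:
  shows "(\<lambda>n. (1/16)^n * (real (2*n choose n))^2 * harm2 n / (real n + 1))
           sums (32 * catalan / pi + 2 * pi / 3 - 16 * ln 2)"
proof -
  have tm: "(1/16)^n * (real (2*n choose n))^2 * harm2 n / (real n + 1) = cb n ^ 2 * harm2 n / (real n + 1)" for n
  proof -
    have "(4::real)^n * 4^n = 16^n" by (simp add: power_mult_distrib[symmetric])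
    thus ?thesis unfolding cb_def by (simp add: power_divide power2_eq_square field_simps)
  qed
  have lim1: "(\<lambda>N. 4 * (real N * cb N ^ 2) * harm2 N) \<longlonglongrightarrow> 4 * (1/pi) * (pi^2/6)"
    by (intro tendsto_mult tendsto_const n_cb2_lim harm2_lim)
  have L: "(\<lambda>N. 4 * (real N * cb N ^ 2) * harm2 N - 4 * (\<Sum>n<N. cb (Suc n) ^ 2 / (real n + 1)))
        \<longlonglongrightarrow> 4 * (1/pi) * (pi^2/6) - 4 * (4 * ln 2 - 8 * catalan / pi)"
    by (intro tendsto_diff tendsto_mult tendsto_const lim1 S1_lim)
  have V: "4 * (1/pi) * (pi^2/6) - 4 * (4 * ln 2 - 8 * catalan / pi) = 32 * catalan / pi + 2 * pi / 3 - 16 * ln 2"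
    by (simp add: field_simps power2_eq_square)
  have P: "(\<lambda>N. \<Sum>n<N. (1/16)^n * (real (2*n choose n))^2 * harm2 n / (real n + 1))
       = (\<lambda>N. 4 * (real N * cb N ^ 2) * harm2 N - 4 * (\<Sum>n<N. cb (Suc n) ^ 2 / (real n + 1)))"
    unfolding tm telescope by (simp add: mult.assoc)
  show ?thesis unfolding sums_def P using L unfolding V .
qed


end
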